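(* Assume that at every optimizer of problem (P4) the density components satisfy $\rho^{(l)}_e(t)\ge\epsilon(\beta)$ for all $e,t,l$. Let (P4') be the problem obtained from (P4) by adding variables $\vartheta^{(l)}_e(t)\in\mathbb{R}$, adding the constraints $(\vartheta^{(l)}_e(t))^2\le\nu^{(l)}_e(t)\rho^{(l)}_e(t)$ for all $e,t,l$, and replacing the objective term $\frac1N\sum_{e,t,l}\nu^{(l)}_e(t)\rho^{(l)}_e(t)$ by $\frac1N\sum_{e,t,l}(\vartheta^{(l)}_e(t))^2$. Then (P4') is equivalent to (P4) in the sense that their optimal objective values coincide and the set of optimizers of (P4) is the projection of the set of optimizers of (P4'). Further, for any feasible point of (P4'), with $u_e(t)=\sum_i\gamma^{(i)}x_{e,i}(t)$ and $\hat J$ the (P4') objective value at that point, one has $\mathrm{Prob}^N\big(\mathbb{E}_{\mathbb{P}(u)}[H(u;\rho)]\ge\hat J\big)\ge1-\beta$.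
   Context: Data: integers $n,T,N\ge1$, $\mathcal E=\{1,\dots,n\}$, $\mathcal T=\{0,\dots,T-1\}$, $\mathcal L=\{1,\dots,N\}$, $\mathcal O=\{1,\dots,m\}$; speed-limit values $0<\gamma^{(1)}<\dots<\gamma^{(m)}$, $\Gamma=\{\gamma^{(i)}\}$; for each $e$: $h_e>0$, $\bar\rho_e>0$, $\bar f_e>0$, $\bar u_e>0$ with $\bar u_e\bar\rho_e>\bar f_e$, $\tau_e=\bar f_e/(\bar u_e\bar\rho_e-\bar f_e)$, $\rho^c_e(v)=\tau_e\bar\rho_e\bar u_e/(\tau_e\bar u_e+v)$; constant $\bar\eta>0$. Random vector $\varpi=(\omega,\rho(0),r^{in},r^{o})$ ($\omega(t)\ge0$, $\rho(0)\in\mathbb{R}^n_{\ge0}$, $r^{in}_e(t),r^o_e(t)\in[0,1)$) with light-tailed distribution $\mathbb{P}_\varpi$; $\varpi^{(l)}=(\omega^{(l)},\rho^{(l)}(0),r^{in,(l)},r^{o,(l)})$, $l\in\mathcal L$, are $N$ i.i.d. samples; $\kappa^{(l)}_e(t)=\frac{1-r^{o,(l)}_{e-1}(t)}{1-r^{in,(l)}_e(t)}$. For $u\in\Gamma^{nT}$, $\mathbb{P}(u)$ is the law of the trajectory $\rho$ given by $\rho_1(t+1)=\rho_1(t)+h_1(\omega(t)-u_1(t)\rho_1(t))$, $\rho_e(t+1)=\rho_e(t)+h_e\kappa_e(t)u_{e-1}(t)\rho_{e-1}(t)-h_eu_e(t)\rho_e(t)$ ($e\ge2$) when $\varpi\sim\mathbb{P}_\varpi$,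 supported on $\{\rho:0\le\rho_e(t)\le\rho^c_e(u_e(t))\}$; $H(u;\rho)=\frac1T\sum_{e,t}\rho_e(t)u_e(t)$; $\beta\in(0,1)$ and $\epsilon(\beta)>0$ is a Wasserstein radius (1-norm) such that, with $\hat{\mathbb{P}}(u)$ the empirical distribution of the sample trajectories, $\mathbb{P}(u)$ lies in the Wasserstein ball of radius $\epsilon(\beta)$ around $\hat{\mathbb{P}}(u)$ intersected with the light-tailed distributions on its support with $\mathrm{Prob}^N$-probability at least $1-\beta$; $\mathrm{Prob}^N$ is the product probability over the samples. Problem (P4): maximize $-\lambda\epsilon(\beta)-\frac1N\sum_{e,t,l}\bar f_e\bar\rho_e\eta^{(l)}_e(t)+\frac1N\sum_{e,t,l}\nu^{(l)}_e(t)\rho^{(l)}_e(t)$ over $x_{e,i}(t),y^{(l)}_{e,i}(t),z^{(l)}_{e,i}(t),\rho^{(l)}_e(t),\lambda,\mu^{(l)}_e(t),\nu^{(l)}_e(t),\eta^{(l)}_e(t)$ subject to, for all $e,i,t,l$: $x_{e,i}(t)\in\{0,1\}$, $\sum_ix_{e,i}(t)=1$, $\gamma^{(1)}\le\sum_i\gamma^{(i)}x_{e,i}(t)\le\gamma^{(m)}$; $0\le z^{(l)}_{e,i}(t)\le\bar\eta x_{e,i}(t)$, $\eta^{(l)}_e(t)-\bar\eta(1-x_{e,i}(t))\le z^{(l)}_{e,i}(t)\le\eta^{(l)}_e(t)$, $0\le y^{(l)}_{e,i}(t)\le\bar\rho_ex_{e,i}(t)$, $\rho^{(l)}_e(t)-\bar\rho_e(1-x_{e,i}(t))\le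 y^{(l)}_{e,i}(t)\le\rho^{(l)}_e(t)$; $\rho^{(l)}_1(t+1)=\rho^{(l)}_1(t)+h_1\omega^{(l)}(t)-h_1\sum_i\gamma^{(i)}y^{(l)}_{1,i}(t)$; for $e\ge2$: $\rho^{(l)}_e(t+1)=\rho^{(l)}_e(t)+h_e\kappa^{(l)}_e(t)\sum_i\gamma^{(i)}y^{(l)}_{e-1,i}(t)-h_e\sum_i\gamma^{(i)}y^{(l)}_{e,i}(t)$ and $\kappa^{(l)}_e(t)\sum_i\gamma^{(i)}y^{(l)}_{e-1,i}(t)\le\min\{\bar f_e,\tau_e\bar u_e(\bar\rho_e-\rho^{(l)}_e(t))\}$; $\rho^{(l)}_e(0)$ equal to the sample data; $\sum_i\gamma^{(i)}(\bar\rho_e-\bar f_e/\bar u_e)z^{(l)}_{e,i}(t)-\mu^{(l)}_e(t)+\bar f_e\eta^{(l)}_e(t)\ge0$; $\nu^{(l)}_e(t)=\mu^{(l)}_e(t)+\frac1T\sum_i\gamma^{(i)}x_{e,i}(t)$; $\max_{e,t}|\nu^{(l)}_e(t)|\le\lambda$; $0\le\eta^{(l)}_e(t)\le\bar\eta$. *)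

theory Defs
  imports "HOL-Probability.Probability"
begin

text \<open>nE = n (cells), nT = T (horizon), nL = N (samples), nO = m (speed-limit options),
  gam i = gamma^(i), hh e = h_e, rbar e = rho-bar_e, fbar e = f-bar_e, ubar e = u-bar_e,
  etab = eta-bar.\<close>
record netp =
  nE :: nat
  nT :: nat
  nL :: nat
  nO :: nat
  gam :: "nat \<Rightarrow> real"
  hh :: "nat \<Rightarrow> real"
  rbar :: "nat \<Rightarrow> real"
  fbar :: "nat \<Rightarrow> real"
  ubar :: "nat \<Rightarrow> real"
  etab :: real

definition Es :: "netp \<Rightarrow> nat set" where "Es P = {1..nE P}"
definition Ts :: "netp \<Rightarrow> nat set" where "Ts P = {..<nT P}"
definition Ls :: "netp \<Rightarrow> nat set" where "Ls P = {1..nL P}"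
definition Os :: "netp \<Rightarrow> nat set" where "Os P = {1..nO P}"

definition tau :: "netp \<Rightarrow> nat \<Rightarrow> real" where
  "tau P e = fbar P e / (ubar P e * rbar P e - fbar P e)"

definition rhoc :: "netp \<Rightarrow> nat \<Rightarrow> real \<Rightarrow> real" where
  "rhoc P e v = tau P e * rbar P e * ubar P e / (tau P e * ubar P e + v)"

definition uOf :: "netp \<Rightarrow> (nat \<Rightarrow> nat \<Rightarrow> nat \<Rightarrow> real) \<Rightarrow> nat \<Rightarrow> nat \<Rightarrow> real" where
  "uOf P x e t = (\<Sum>i\<in>Os P. gam P i * x e i t)"

definition kap :: "(nat \<Rightarrow> nat \<Rightarrow> real) \<Rightarrow> (nat \<Rightarrow> nat \<Rightarrow> real) \<Rightarrow> nat \<Rightarrow> nat \<Rightarrow> real" where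
  "kap rin ro e t = (1 - ro (e - 1) t) / (1 - rin e t)"

text \<open>Decision variables of (P4). Indexing: vx e i t; vy, vz: l e i t; vrho, vmu, vnu, veta: l e t.\<close>
record pt4 =
  vx :: "nat \<Rightarrow> nat \<Rightarrow> nat \<Rightarrow> real"
  vy :: "nat \<Rightarrow> nat \<Rightarrow> nat \<Rightarrow> nat \<Rightarrow> real"
  vz :: "nat \<Rightarrow> nat \<Rightarrow> nat \<Rightarrow> nat \<Rightarrow> real"
  vrho :: "nat \<Rightarrow> nat \<Rightarrow> nat \<Rightarrow> real"
  vlam :: real
  vmu :: "nat \<Rightarrow> nat \<Rightarrow> nat \<Rightarrow> real"
  vnu :: "nat \<Rightarrow> nat \<Rightarrow> nat \<Rightarrow> real"
  veta :: "nat \<Rightarrow> nat \<Rightarrow> nat \<Rightarrow> real"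

text \<open>Sample data: om l t = omega^(l)(t), r0 l e = rho^(l)_e(0), kp l e t = kappa^(l)_e(t).\<close>
definition p4_feas :: "netp \<Rightarrow> (nat \<Rightarrow> nat \<Rightarrow> real) \<Rightarrow> (nat \<Rightarrow> nat \<Rightarrow> real)
    \<Rightarrow> (nat \<Rightarrow> nat \<Rightarrow> nat \<Rightarrow> real) \<Rightarrow> pt4 \<Rightarrow> bool" where
  "p4_feas P om r0 kp p \<longleftrightarrow>
    (let Eset = Es P; Tset = Ts P; Lset = Ls P; Oset = Os P; g = gam P;
         x = vx p; y = vy p; z = vz p; \<rho> = vrho p; \<mu> = vmu p; \<nu> = vnu p; \<eta> = veta p;
         Sy = (\<lambda>l e t. \<Sum>i\<in>Oset. g i * y l e i t)
     in
      (\<forall>e\<in>Eset. \<forall>i\<in>Oset. \<forall>t\<in>Tset. x e i t \<in> {0, 1}) \<and>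
      (\<forall>e\<in>Eset. \<forall>t\<in>Tset. (\<Sum>i\<in>Oset. x e i t) = 1 \<and>
          g 1 \<le> (\<Sum>i\<in>Oset. g i * x e i t) \<and> (\<Sum>i\<in>Oset. g i * x e i t) \<le> g (nO P)) \<and>
      (\<forall>l\<in>Lset. \<forall>e\<in>Eset. \<forall>i\<in>Oset. \<forall>t\<in>Tset.
          0 \<le> z l e i t \<and> z l e i t \<le> etab P * x e i t \<and>
          \<eta> l e t - etab P * (1 - x e i t) \<le> z l e i t \<and> z l e i t \<le> \<eta> l e t \<and>
          0 \<le> y l e i t \<and> y l e i t \<le> rbar P e * x e i t \<and>
          \<rho> l e t - rbar P e * (1 - x e i t) \<le> y l e i t \<and> y l e i t \<le> \<rho> l e t) \<and>
      (\<forall>l\<in>Lset. \<forall>t\<in>Tset. \<rho> l 1 (Suc t) = \<rho> l 1 t + hh P 1 * om l t - hh P 1 * Sy l 1 t) \<and>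
      (\<forall>l\<in>Lset. \<forall>e\<in>Eset. \<forall>t\<in>Tset. 2 \<le> e \<longrightarrow>
          \<rho> l e (Suc t) = \<rho> l e t + hh P e * kp l e t * Sy l (e - 1) t - hh P e * Sy l e t \<and>
          kp l e t * Sy l (e - 1) t \<le> min (fbar P e) (tau P e * ubar P e * (rbar P e - \<rho> l e t))) \<and>
      (\<forall>l\<in>Lset. \<forall>e\<in>Eset. \<rho> l e 0 = r0 l e) \<and>
      (\<forall>l\<in>Lset. \<forall>e\<in>Eset. \<forall>t\<in>Tset.
          (\<Sum>i\<in>Oset. g i * (rbar P e - fbar P e / ubar P e) * z l e i t) - \<mu> l e t + fbar P e * \<eta> l e t \<ge> 0 \<and>
          \<nu> l e t = \<mu> l e t + (1 / real (nT P)) * (\<Sum>i\<in>Oset. g i * x e i t) \<and>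
          0 \<le> \<eta> l e t \<and> \<eta> l e t \<le> etab P) \<and>
      (\<forall>l\<in>Lset. \<forall>e\<in>Eset. \<forall>t\<in>Tset. \<bar>\<nu> l e t\<bar> \<le> vlam p))"

definition p4_obj :: "netp \<Rightarrow> real \<Rightarrow> pt4 \<Rightarrow> real" where
  "p4_obj P eps p =
     - vlam p * eps
     - (1 / real (nL P)) * (\<Sum>e\<in>Es P. \<Sum>t\<in>Ts P. \<Sum>l\<in>Ls P. fbar P e * rbar P e * veta p l e t)
     + (1 / real (nL P)) * (\<Sum>e\<in>Es P. \<Sum>t\<in>Ts P. \<Sum>l\<in>Ls P. vnu p l e t * vrho p l e t)"

text \<open>(P4'): extra variables theta (indexed l e t), the second component of the pair.\<close>
definition p4'_feas :: "netp \<Rightarrow> (nat \<Rightarrow> nat \<Rightarrow> real) \<Rightarrow> (nat \<Rightarrow> nat \<Rightarrow> real)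
    \<Rightarrow> (nat \<Rightarrow> nat \<Rightarrow> nat \<Rightarrow> real) \<Rightarrow> pt4 \<times> (nat \<Rightarrow> nat \<Rightarrow> nat \<Rightarrow> real) \<Rightarrow> bool" where
  "p4'_feas P om r0 kp q \<longleftrightarrow>
     p4_feas P om r0 kp (fst q) \<and>
     (\<forall>l\<in>Ls P. \<forall>e\<in>Es P. \<forall>t\<in>Ts P.
        (snd q l e t)\<^sup>2 \<le> vnu (fst q) l e t * vrho (fst q) l e t)"

definition p4'_obj :: "netp \<Rightarrow> real \<Rightarrow> pt4 \<times> (nat \<Rightarrow> nat \<Rightarrow> nat \<Rightarrow> real) \<Rightarrow> real" where
  "p4'_obj P eps q =
     - vlam (fst q) * eps
     - (1 / real (nL P)) * (\<Sum>e\<in>Es P. \<Sum>t\<in>Ts P. \<Sum>l\<in>Ls P. fbar P e * rbar P e * veta (fst q) l e t)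
     + (1 / real (nL P)) * (\<Sum>e\<in>Es P. \<Sum>t\<in>Ts P. \<Sum>l\<in>Ls P. (snd q l e t)\<^sup>2)"

definition p4_opt :: "netp \<Rightarrow> real \<Rightarrow> (nat \<Rightarrow> nat \<Rightarrow> real) \<Rightarrow> (nat \<Rightarrow> nat \<Rightarrow> real)
    \<Rightarrow> (nat \<Rightarrow> nat \<Rightarrow> nat \<Rightarrow> real) \<Rightarrow> pt4 set" where
  "p4_opt P eps om r0 kp =
     {p. p4_feas P om r0 kp p \<and> (\<forall>p'. p4_feas P om r0 kp p' \<longrightarrow> p4_obj P eps p' \<le> p4_obj P eps p)}"

definition p4'_opt :: "netp \<Rightarrow> real \<Rightarrow> (nat \<Rightarrow> nat \<Rightarrow> real) \<Rightarrow> (nat \<Rightarrow> nat \<Rightarrow> real)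
    \<Rightarrow> (nat \<Rightarrow> nat \<Rightarrow> nat \<Rightarrow> real) \<Rightarrow> (pt4 \<times> (nat \<Rightarrow> nat \<Rightarrow> nat \<Rightarrow> real)) set" where
  "p4'_opt P eps om r0 kp =
     {q. p4'_feas P om r0 kp q \<and> (\<forall>q'. p4'_feas P om r0 kp q' \<longrightarrow> p4'_obj P eps q' \<le> p4'_obj P eps q)}"

text \<open>Sample data extracted from a sample vector s (s l = varpi^(l)).\<close>
definition omS :: "('w \<Rightarrow> nat \<Rightarrow> real) \<Rightarrow> (nat \<Rightarrow> 'w) \<Rightarrow> nat \<Rightarrow> nat \<Rightarrow> real" where
  "omS om s = (\<lambda>l t. om (s l) t)"
definition r0S :: "('w \<Rightarrow> nat \<Rightarrow> real) \<Rightarrow> (nat \<Rightarrow> 'w) \<Rightarrow> nat \<Rightarrow> nat \<Rightarrow> real" where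
  "r0S r0 s = (\<lambda>l e. r0 (s l) e)"
definition kS :: "('w \<Rightarrow> nat \<Rightarrow> nat \<Rightarrow> real) \<Rightarrow> ('w \<Rightarrow> nat \<Rightarrow> nat \<Rightarrow> real) \<Rightarrow> (nat \<Rightarrow> 'w)
    \<Rightarrow> nat \<Rightarrow> nat \<Rightarrow> nat \<Rightarrow> real" where
  "kS rin ro s = (\<lambda>l e t. kap (rin (s l)) (ro (s l)) e t)"

definition TS :: "(nat \<Rightarrow> nat \<Rightarrow> real) measure" where
  "TS = PiM (UNIV :: nat set) (\<lambda>_. PiM (UNIV :: nat set) (\<lambda>_. (borel :: real measure)))"

fun traj :: "netp \<Rightarrow> (nat \<Rightarrow> nat \<Rightarrow> real) \<Rightarrow> (nat \<Rightarrow> real) \<Rightarrow> (nat \<Rightarrow> real)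
    \<Rightarrow> (nat \<Rightarrow> nat \<Rightarrow> real) \<Rightarrow> nat \<Rightarrow> nat \<Rightarrow> real" where
  "traj P u om r0 kp e 0 = r0 e"
| "traj P u om r0 kp e (Suc t) =
     (if e = 1 then traj P u om r0 kp 1 t + hh P 1 * (om t - u 1 t * traj P u om r0 kp 1 t)
      else traj P u om r0 kp e t + hh P e * kp e t * u (e - 1) t * traj P u om r0 kp (e - 1) t
             - hh P e * u e t * traj P u om r0 kp e t)"

definition trajw :: "netp \<Rightarrow> (nat \<Rightarrow> nat \<Rightarrow> real) \<Rightarrow> (nat \<Rightarrow> real) \<Rightarrow> (nat \<Rightarrow> real)
    \<Rightarrow> (nat \<Rightarrow> nat \<Rightarrow> real) \<Rightarrow> nat \<Rightarrow> nat \<Rightarrow> real" where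
  "trajw P u om r0 kp = (\<lambda>e t. if e \<in> Es P \<and> t \<in> Ts P then traj P u om r0 kp e t else 0)"

definition Pu :: "netp \<Rightarrow> 'w measure \<Rightarrow> ('w \<Rightarrow> nat \<Rightarrow> real) \<Rightarrow> ('w \<Rightarrow> nat \<Rightarrow> real)
    \<Rightarrow> ('w \<Rightarrow> nat \<Rightarrow> nat \<Rightarrow> real) \<Rightarrow> ('w \<Rightarrow> nat \<Rightarrow> nat \<Rightarrow> real) \<Rightarrow> (nat \<Rightarrow> nat \<Rightarrow> real)
    \<Rightarrow> (nat \<Rightarrow> nat \<Rightarrow> real) measure" where
  "Pu P Pw om r0 rin ro u = distr Pw TS (\<lambda>w. trajw P u (om w) (r0 w) (kap (rin w) (ro w)))"

definition Phat :: "netp \<Rightarrow> ('w \<Rightarrow> nat \<Rightarrow> real) \<Rightarrow> ('w \<Rightarrow> nat \<Rightarrow> real)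
    \<Rightarrow> ('w \<Rightarrow> nat \<Rightarrow> nat \<Rightarrow> real) \<Rightarrow> ('w \<Rightarrow> nat \<Rightarrow> nat \<Rightarrow> real) \<Rightarrow> (nat \<Rightarrow> nat \<Rightarrow> real)
    \<Rightarrow> (nat \<Rightarrow> 'w) \<Rightarrow> (nat \<Rightarrow> nat \<Rightarrow> real) measure" where
  "Phat P om r0 rin ro u s =
     distr (uniform_count_measure (Ls P)) TS
       (\<lambda>l. trajw P u (om (s l)) (r0 (s l)) (kap (rin (s l)) (ro (s l))))"

definition Hf :: "netp \<Rightarrow> (nat \<Rightarrow> nat \<Rightarrow> real) \<Rightarrow> (nat \<Rightarrow> nat \<Rightarrow> real) \<Rightarrow> real" where
  "Hf P u \<rho> = (1 / real (nT P)) * (\<Sum>e\<in>Es P. \<Sum>t\<in>Ts P. \<rho> e t * u e t)"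

definition norm1 :: "netp \<Rightarrow> (nat \<Rightarrow> nat \<Rightarrow> real) \<Rightarrow> real" where
  "norm1 P \<rho> = (\<Sum>e\<in>Es P. \<Sum>t\<in>Ts P. \<bar>\<rho> e t\<bar>)"

definition Wass :: "netp \<Rightarrow> (nat \<Rightarrow> nat \<Rightarrow> real) measure \<Rightarrow> (nat \<Rightarrow> nat \<Rightarrow> real) measure \<Rightarrow> ennreal" where
  "Wass P Q1 Q2 =
     (INF \<pi>\<in>{\<pi>. sets \<pi> = sets (TS \<Otimes>\<^sub>M TS) \<and> distr \<pi> TS fst = Q1 \<and> distr \<pi> TS snd = Q2}.
        \<integral>\<^sup>+ z. ennreal (norm1 P (\<lambda>e t. fst z e t - snd z e t)) \<partial>\<pi>)"

definition supp_set :: "netp \<Rightarrow> (nat \<Rightarrow> nat \<Rightarrow> real) \<Rightarrow> (nat \<Rightarrow> nat \<Rightarrow> real) set" where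
  "supp_set P u = {\<rho>. \<forall>e\<in>Es P. \<forall>t\<in>Ts P. 0 \<le> \<rho> e t \<and> \<rho> e t \<le> rhoc P e (u e t)}"

definition light_tailed :: "netp \<Rightarrow> (nat \<Rightarrow> nat \<Rightarrow> real) measure \<Rightarrow> bool" where
  "light_tailed P Q \<longleftrightarrow> (\<exists>a>1. (\<integral>\<^sup>+ \<rho>. ennreal (exp (norm1 P \<rho> powr a)) \<partial>Q) < \<infinity>)"

definition wball :: "netp \<Rightarrow> real \<Rightarrow> (nat \<Rightarrow> nat \<Rightarrow> real) \<Rightarrow> (nat \<Rightarrow> nat \<Rightarrow> real) measure
    \<Rightarrow> (nat \<Rightarrow> nat \<Rightarrow> real) measure set" where
  "wball P eps u Q0 =
     {Q. prob_space Q \<and> sets Q = sets TS \<and> (AE \<rho> in Q. \<rho> \<in> supp_set P u) \<and>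
         light_tailed P Q \<and> Wass P Q Q0 \<le> ennreal eps}"

definition wnorm :: "netp \<Rightarrow> ('w \<Rightarrow> nat \<Rightarrow> real) \<Rightarrow> ('w \<Rightarrow> nat \<Rightarrow> real)
    \<Rightarrow> ('w \<Rightarrow> nat \<Rightarrow> nat \<Rightarrow> real) \<Rightarrow> ('w \<Rightarrow> nat \<Rightarrow> nat \<Rightarrow> real) \<Rightarrow> 'w \<Rightarrow> real" where
  "wnorm P om r0 rin ro w =
     (\<Sum>t\<in>Ts P. \<bar>om w t\<bar>) + (\<Sum>e\<in>Es P. \<bar>r0 w e\<bar>) +
     (\<Sum>e\<in>Es P. \<Sum>t\<in>Ts P. \<bar>rin w e t\<bar> + \<bar>ro w e t\<bar>)"

definition ProbN :: "netp \<Rightarrow> 'w measure \<Rightarrow> (nat \<Rightarrow> 'w) measure" where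
  "ProbN P Pw = PiM (Ls P) (\<lambda>_. Pw)"

end

theory Submission
  imports Defs
begin

lemma meas_coord[measurable]: "(\<lambda>\<rho>. \<rho> e t) \<in> borel_measurable TS"
proof -
  have 1: "(\<lambda>\<rho>::nat\<Rightarrow>nat\<Rightarrow>real. \<rho> e) \<in> measurable TS (Pi\<^sub>M UNIV (\<lambda>_. borel))"
    unfolding TS_def by (rule measurable_component_singleton) simp
  have 2: "(\<lambda>g::nat\<Rightarrow>real. g t) \<in> borel_measurable (Pi\<^sub>M UNIV (\<lambda>_. borel))"
    by (rule measurable_component_singleton) simp
  show ?thesis using measurable_comp[OF 1 2] by (simp add: comp_def)
qed
lemma meas_Hf[measurable]: "Hf P u \<in> borel_measurable TS"
  unfolding Hf_def by measurable
lemma meas_norm1[measurable]: "(\<lambda>z. norm1 P (\<lambda>e t. fst z e t - snd z e t)) \<in> borel_measurable (TS \<Otimes>\<^sub>M TS)"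
  unfolding norm1_def by measurable
lemma meas_norm1'[measurable]: "(\<lambda>z. norm1 P (\<lambda>e t. z e t - Z e t)) \<in> borel_measurable TS"
  unfolding norm1_def by measurable



lemma norm1_tri: "norm1 P (\<lambda>e t. a e t - c e t) \<le> norm1 P (\<lambda>e t. a e t - b e t) + norm1 P (\<lambda>e t. b e t - c e t)"
  unfolding norm1_def sum.distrib[symmetric]
  by (intro sum_mono) auto

lemma norm1_zero: "norm1 P (\<lambda>e t. 0) = 0"
  unfolding norm1_def by simp

lemma space_TS: "space TS = UNIV"
  unfolding TS_def by (simp add: space_PiM)

lemma dro_bound:
  fixes Q :: "(nat\<Rightarrow>nat\<Rightarrow>real) measure" and Z :: "nat \<Rightarrow> nat\<Rightarrow>nat\<Rightarrow>real" and L :: "nat set"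
  assumes L: "finite L" "L \<noteq> {}"
    and Qp: "prob_space Q" and Qs: "sets Q = sets TS"
    and AEQ: "AE \<xi> in Q. \<xi> \<in> S"
    and W: "Wass P Q (distr (uniform_count_measure L) TS Z) \<le> ennreal eps"
    and lam: "0 \<le> lam" and eps: "0 \<le> eps"
    and hm: "h \<in> borel_measurable TS" and hint: "integrable Q h"
    and pw: "\<forall>l\<in>L. \<forall>\<xi>\<in>S. \<phi> l \<le> h \<xi> + lam * norm1 P (\<lambda>e t. \<xi> e t - Z l e t)"
  shows "(\<Sum>l\<in>L. \<phi> l) / card L - lam * eps \<le> integral\<^sup>L Q h"
proof -
  define Ph where "Ph = distr (uniform_count_measure L) TS Z"
  define \<psi> where "\<psi> \<zeta> = Max ((\<lambda>l. \<phi> l - lam * norm1 P (\<lambda>e t. \<zeta> e t - Z l e t)) ` L)" for \<zeta>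
  have \<psi>m[measurable]: "\<psi> \<in> borel_measurable TS"
    unfolding \<psi>_def using L by measurable
  have \<psi>Z: "\<phi> l \<le> \<psi> (Z l)" if "l \<in> L" for l
  proof -
    have "\<phi> l - lam * norm1 P (\<lambda>e t. Z l e t - Z l e t) \<le> \<psi> (Z l)"
      unfolding \<psi>_def by (intro Max_ge finite_imageI imageI L that)
    then show ?thesis by (simp add: norm1_zero)
  qed
  have \<psi>le: "\<psi> \<zeta> \<le> h \<xi> + lam * norm1 P (\<lambda>e t. \<xi> e t - \<zeta> e t)" if "\<xi> \<in> S" for \<xi> \<zeta>
  proof -
    obtain l where l: "l \<in> L" and eq: "\<psi> \<zeta> = \<phi> l - lam * norm1 P (\<lambda>e t. \<zeta> e t - Z l e t)"
    proof -
      have "\<psi> \<zeta> \<in> (\<lambda>l. \<phi> l - lam * norm1 P (\<lambda>e t. \<zeta> e t - Z l e t)) ` L"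
        unfolding \<psi>_def using L by (intro Max_in) auto
      then show ?thesis using that by blast
    qed
    have "\<phi> l \<le> h \<xi> + lam * norm1 P (\<lambda>e t. \<xi> e t - Z l e t)" using pw l that by auto
    moreover have "lam * norm1 P (\<lambda>e t. \<xi> e t - Z l e t) \<le> lam * (norm1 P (\<lambda>e t. \<xi> e t - \<zeta> e t) + norm1 P (\<lambda>e t. \<zeta> e t - Z l e t))"
      using lam norm1_tri by (intro mult_left_mono) auto
    ultimately show ?thesis unfolding eq by (simp add: algebra_simps)
  qed
  have Zm[measurable]: "Z \<in> measurable (uniform_count_measure L) TS"
    by (subst measurable_cong_sets[OF sets_uniform_count_measure_count_space refl])
       (simp add: space_TS)
  interpret U: prob_space "uniform_count_measure L"
    using L by (rule prob_space_uniform_count_measure)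
  have intPh: "integral\<^sup>L Ph \<psi> = (\<Sum>l\<in>L. \<psi> (Z l)) / card L"
    unfolding Ph_def integral_distr[OF Zm \<psi>m] by (rule integral_uniform_count_measure[OF L(1)])
  have intU: "integrable (uniform_count_measure L) (\<lambda>l. \<psi> (Z l))"
  proof (rule U.integrable_const_bound[where B="Max ((\<lambda>l. \<bar>\<psi> (Z l)\<bar>) ` L)"])
    show "AE x in uniform_count_measure L. norm (\<psi> (Z x)) \<le> Max ((\<lambda>l. \<bar>\<psi> (Z l)\<bar>) ` L)"
      using L by (intro AE_I2) (auto simp: space_uniform_count_measure)
  qed measurable
  have intPhi: "integrable Ph \<psi>"
    unfolding Ph_def integrable_distr_eq[OF Zm \<psi>m] by (rule intU)
  have key: "(\<Sum>l\<in>L. \<phi> l) / card L \<le> integral\<^sup>L Q h + lam * enn2real (\<integral>\<^sup>+ z. ennreal (norm1 P (\<lambda>e t. fst z e t - snd z e t)) \<partial>\<pi>)"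
    if \<pi>s: "sets \<pi> = sets (TS \<Otimes>\<^sub>M TS)" and \<pi>1: "distr \<pi> TS fst = Q" and \<pi>2: "distr \<pi> TS snd = Ph"
      and fin: "(\<integral>\<^sup>+ z. ennreal (norm1 P (\<lambda>e t. fst z e t - snd z e t)) \<partial>\<pi>) < \<top>" for \<pi>
  proof -
    let ?n = "\<lambda>z. norm1 P (\<lambda>e t. fst z e t - snd z e t)"
    have mc: "measurable \<pi> N = measurable (TS \<Otimes>\<^sub>M TS) N" for N
      using \<pi>s by (rule measurable_cong_sets) simp
    have fm: "fst \<in> measurable \<pi> TS" unfolding mc by (rule measurable_fst)
    have sm: "snd \<in> measurable \<pi> TS" unfolding mc by (rule measurable_snd)
    have nm: "?n \<in> borel_measurable \<pi>" unfolding mc by (rule meas_norm1)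
    have "emeasure (distr \<pi> TS fst) (space TS) = emeasure \<pi> (fst -` space TS \<inter> space \<pi>)"
      by (rule emeasure_distr[OF fm]) simp
    then have "emeasure \<pi> (space \<pi>) = emeasure Q (space Q)"
      unfolding \<pi>1 using sets_eq_imp_space_eq[OF Qs] by (simp add: space_TS)
    then interpret Pi: prob_space \<pi>
      using Qp by (intro prob_spaceI) (simp add: prob_space.emeasure_space_1)
    have ih: "integrable \<pi> (\<lambda>z. h (fst z))"
      using hint unfolding \<pi>1[symmetric] integrable_distr_eq[OF fm hm] .
    have i\<psi>: "integrable \<pi> (\<lambda>z. \<psi> (snd z))"
      using intPhi unfolding \<pi>2[symmetric] integrable_distr_eq[OF sm \<psi>m] .
    obtain x where x: "(\<integral>\<^sup>+ z. ennreal (?n z) \<partial>\<pi>) = ennreal x"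
      using fin less_top_ennreal by blast
    have nn: "0 \<le> ?n z" for z unfolding norm1_def by (intro sum_nonneg) auto
    have in1: "integrable \<pi> ?n"
      by (rule integrableI_nn_integral_finite[OF nm _ x]) (simp add: nn)
    have inE: "integral\<^sup>L \<pi> ?n = enn2real (\<integral>\<^sup>+ z. ennreal (?n z) \<partial>\<pi>)"
      by (rule integral_eq_nn_integral[OF nm]) (auto simp: nn)
    have AEf: "AE z in \<pi>. fst z \<in> S"
      using AEQ unfolding \<pi>1[symmetric] by (rule AE_distrD[OF fm])
    have "integral\<^sup>L \<pi> (\<lambda>z. \<psi> (snd z)) \<le> integral\<^sup>L \<pi> (\<lambda>z. h (fst z) + lam * ?n z)"
    proof (rule integral_mono_AE)
      show "integrable \<pi> (\<lambda>z. \<psi> (snd z))" by (rule i\<psi>)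
      show "integrable \<pi> (\<lambda>z. h (fst z) + lam * ?n z)"
        by (intro Bochner_Integration.integrable_add ih integrable_mult_right in1)
      show "AE z in \<pi>. \<psi> (snd z) \<le> h (fst z) + lam * ?n z"
        using AEf by (rule eventually_mono) (rule \<psi>le)
    qed
    also have "\<dots> = integral\<^sup>L Q h + lam * enn2real (\<integral>\<^sup>+ z. ennreal (?n z) \<partial>\<pi>)"
    proof -
      have i1: "integral\<^sup>L \<pi> (\<lambda>z. h (fst z)) = integral\<^sup>L Q h"
        using integral_distr[OF fm hm] \<pi>1 by simp
      show ?thesis
        using ih in1 inE i1 by (simp add: Bochner_Integration.integral_add)
    qed
    finally have a: "integral\<^sup>L \<pi> (\<lambda>z. \<psi> (snd z)) \<le> integral\<^sup>L Q h + lam * enn2real (\<integral>\<^sup>+ z. ennreal (?n z) \<partial>\<pi>)" .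
    have b: "integral\<^sup>L \<pi> (\<lambda>z. \<psi> (snd z)) = (\<Sum>l\<in>L. \<psi> (Z l)) / card L"
      using intPh unfolding \<pi>2[symmetric] integral_distr[OF sm \<psi>m] .
    have c: "(\<Sum>l\<in>L. \<phi> l) / card L \<le> (\<Sum>l\<in>L. \<psi> (Z l)) / card L"
      using \<psi>Z by (intro divide_right_mono sum_mono) auto
    show ?thesis using a b c by linarith
  qed
  define C where "C = {\<pi>. sets \<pi> = sets (TS \<Otimes>\<^sub>M TS) \<and> distr \<pi> TS fst = Q \<and> distr \<pi> TS snd = Ph}"
  have W': "(INF \<pi>\<in>C. \<integral>\<^sup>+ z. ennreal (norm1 P (\<lambda>e t. fst z e t - snd z e t)) \<partial>\<pi>) \<le> ennreal eps"
    using W unfolding Wass_def C_def Ph_def .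
  define D where "D = (\<Sum>l\<in>L. \<phi> l) / card L - integral\<^sup>L Q h"
  show ?thesis
  proof (cases "lam = 0")
    case True
    have "(INF \<pi>\<in>C. \<integral>\<^sup>+ z. ennreal (norm1 P (\<lambda>e t. fst z e t - snd z e t)) \<partial>\<pi>) < \<top>"
      using W' by (simp add: le_less_trans)
    then obtain \<pi> where "\<pi> \<in> C" "(\<integral>\<^sup>+ z. ennreal (norm1 P (\<lambda>e t. fst z e t - snd z e t)) \<partial>\<pi>) < \<top>"
      by (auto simp: INF_less_iff)
    from key[OF _ _ _ this(2)] this(1) True show ?thesis by (auto simp: C_def)
  next
    case False
    with lam have lp: "0 < lam" by simp
    have "ennreal (D / lam) \<le> (INF \<pi>\<in>C. \<integral>\<^sup>+ z. ennreal (norm1 P (\<lambda>e t. fst z e t - snd z e t)) \<partial>\<pi>)"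
    proof (rule INF_greatest)
      fix \<pi> assume "\<pi> \<in> C"
      show "ennreal (D / lam) \<le> (\<integral>\<^sup>+ z. ennreal (norm1 P (\<lambda>e t. fst z e t - snd z e t)) \<partial>\<pi>)"
      proof (cases "(\<integral>\<^sup>+ z. ennreal (norm1 P (\<lambda>e t. fst z e t - snd z e t)) \<partial>\<pi>) < \<top>")
        case True
        note k = key[OF _ _ _ True] 
        have "D \<le> lam * enn2real (\<integral>\<^sup>+ z. ennreal (norm1 P (\<lambda>e t. fst z e t - snd z e t)) \<partial>\<pi>)"
          using k \<open>\<pi> \<in> C\<close> unfolding D_def C_def by auto
        then have "D / lam \<le> enn2real (\<integral>\<^sup>+ z. ennreal (norm1 P (\<lambda>e t. fst z e t - snd z e t)) \<partial>\<pi>)"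
          using lp by (simp add: divide_le_eq mult.commute)
        then have "ennreal (D / lam) \<le> ennreal (enn2real (\<integral>\<^sup>+ z. ennreal (norm1 P (\<lambda>e t. fst z e t - snd z e t)) \<partial>\<pi>))"
          by (rule ennreal_leI)
        also have "ennreal (enn2real (\<integral>\<^sup>+ z. ennreal (norm1 P (\<lambda>e t. fst z e t - snd z e t)) \<partial>\<pi>)) = (\<integral>\<^sup>+ z. ennreal (norm1 P (\<lambda>e t. fst z e t - snd z e t)) \<partial>\<pi>)"
          using True by (intro ennreal_enn2real) simp
        finally show ?thesis .
      next
        case False
        then have "(\<integral>\<^sup>+ z. ennreal (norm1 P (\<lambda>e t. fst z e t - snd z e t)) \<partial>\<pi>) = \<top>"
          using top.not_eq_extremum by blast
        then show ?thesis by simp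
      qed
    qed
    then have "ennreal (D / lam) \<le> ennreal eps" using W' by (rule order_trans)
    then have "D / lam \<le> eps" using eps by (simp add: ennreal_le_iff)
    then have "D \<le> lam * eps" using lp by (simp add: divide_le_eq mult.commute)
    then show ?thesis unfolding D_def by simp
  qed
qed



definition modp :: "pt4 \<Rightarrow> pt4" where
  "modp p = p\<lparr>vmu := \<lambda>l e t. vmu p l e t + max 0 (- vnu p l e t), vnu := \<lambda>l e t. max (vnu p l e t) 0\<rparr>"

definition thet :: "pt4 \<Rightarrow> nat \<Rightarrow> nat \<Rightarrow> nat \<Rightarrow> real" where
  "thet p = (\<lambda>l e t. sqrt (vnu p l e t * vrho p l e t))"

definition "fA P p \<longleftrightarrow> (\<forall>e\<in>Es P. \<forall>i\<in>Os P. \<forall>t\<in>Ts P. vx p e i t \<in> {0, 1}) \<and>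
      (\<forall>e\<in>Es P. \<forall>t\<in>Ts P. (\<Sum>i\<in>Os P. vx p e i t) = 1 \<and>
          gam P 1 \<le> (\<Sum>i\<in>Os P. gam P i * vx p e i t) \<and> (\<Sum>i\<in>Os P. gam P i * vx p e i t) \<le> gam P (nO P))"
definition "fB P p \<longleftrightarrow> (\<forall>l\<in>Ls P. \<forall>e\<in>Es P. \<forall>i\<in>Os P. \<forall>t\<in>Ts P.
          0 \<le> vz p l e i t \<and> vz p l e i t \<le> etab P * vx p e i t \<and>
          veta p l e t - etab P * (1 - vx p e i t) \<le> vz p l e i t \<and> vz p l e i t \<le> veta p l e t \<and>
          0 \<le> vy p l e i t \<and> vy p l e i t \<le> rbar P e * vx p e i t \<and>
          vrho p l e t - rbar P e * (1 - vx p e i t) \<le> vy p l e i t \<and> vy p l e i t \<le> vrho p l e t)"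
definition "fC P om p \<longleftrightarrow> (\<forall>l\<in>Ls P. \<forall>t\<in>Ts P. vrho p l 1 (Suc t) = vrho p l 1 t + hh P 1 * om l t - hh P 1 * (\<Sum>i\<in>Os P. gam P i * vy p l 1 i t))"
definition "fD P kp p \<longleftrightarrow> (\<forall>l\<in>Ls P. \<forall>e\<in>Es P. \<forall>t\<in>Ts P. 2 \<le> e \<longrightarrow>
          vrho p l e (Suc t) = vrho p l e t + hh P e * kp l e t * (\<Sum>i\<in>Os P. gam P i * vy p l (e - 1) i t) - hh P e * (\<Sum>i\<in>Os P. gam P i * vy p l e i t) \<and>
          kp l e t * (\<Sum>i\<in>Os P. gam P i * vy p l (e - 1) i t) \<le> min (fbar P e) (tau P e * ubar P e * (rbar P e - vrho p l e t)))"
definition "fE P r0 p \<longleftrightarrow> (\<forall>l\<in>Ls P. \<forall>e\<in>Es P. vrho p l e 0 = r0 l e)"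
definition "fF P p \<longleftrightarrow> (\<forall>l\<in>Ls P. \<forall>e\<in>Es P. \<forall>t\<in>Ts P.
          (\<Sum>i\<in>Os P. gam P i * (rbar P e - fbar P e / ubar P e) * vz p l e i t) - vmu p l e t + fbar P e * veta p l e t \<ge> 0 \<and>
          vnu p l e t = vmu p l e t + (1 / real (nT P)) * (\<Sum>i\<in>Os P. gam P i * vx p e i t) \<and>
          0 \<le> veta p l e t \<and> veta p l e t \<le> etab P)"
definition "fG P p \<longleftrightarrow> (\<forall>l\<in>Ls P. \<forall>e\<in>Es P. \<forall>t\<in>Ts P. \<bar>vnu p l e t\<bar> \<le> vlam p)"

lemma p4_feas_iff: "p4_feas P om r0 kp p \<longleftrightarrow> fA P p \<and> fB P p \<and> fC P om p \<and> fD P kp p \<and> fE P r0 p \<and> fF P p \<and> fG P p"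
  unfolding p4_feas_def Let_def fA_def fB_def fC_def fD_def fE_def fF_def fG_def by (simp only: conj_assoc)

locale setting =
  fixes P :: netp
  assumes dims: "1 \<le> nE P" "1 \<le> nT P" "1 \<le> nL P" "1 \<le> nO P"
    and gpos: "\<forall>i\<in>Os P. 0 < gam P i"
    and cells: "\<forall>e\<in>Es P. 0 < hh P e \<and> 0 < rbar P e \<and> 0 < fbar P e \<and> 0 < ubar P e
                  \<and> ubar P e * rbar P e > fbar P e"
begin

lemma one_Os: "1 \<in> Os P" using dims by (simp add: Os_def)

lemma feas_rho_nonneg:
  assumes "p4_feas P om r0 kp p" "l \<in> Ls P" "e \<in> Es P" "t \<in> Ts P"
  shows "0 \<le> vrho p l e t"
  using assms one_Os unfolding p4_feas_iff fB_def by force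

lemma feas_u_pos:
  assumes "p4_feas P om r0 kp p" "e \<in> Es P" "t \<in> Ts P"
  shows "0 < (\<Sum>i\<in>Os P. gam P i * vx p e i t)"
proof -
  have "gam P 1 \<le> (\<Sum>i\<in>Os P. gam P i * vx p e i t)"
    using assms unfolding p4_feas_iff fA_def by auto
  moreover have "0 < gam P 1" using gpos one_Os by auto
  ultimately show ?thesis by linarith
qed

lemma S_nonneg:
  assumes "p4_feas P om r0 kp p" "l \<in> Ls P" "e \<in> Es P" "t \<in> Ts P"
  shows "0 \<le> (\<Sum>i\<in>Os P. gam P i * (rbar P e - fbar P e / ubar P e) * vz p l e i t)"
proof (intro sum_nonneg)
  fix i assume i: "i \<in> Os P"
  have "0 \<le> vz p l e i t" using assms i unfolding p4_feas_iff fB_def by auto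
  moreover have "0 \<le> rbar P e - fbar P e / ubar P e"
    using cells assms(3) by (auto simp: field_simps)
  moreover have "0 \<le> gam P i" using gpos i by auto
  ultimately show "0 \<le> gam P i * (rbar P e - fbar P e / ubar P e) * vz p l e i t" by simp
qed

lemma modp_feas:
  assumes F: "p4_feas P om r0 kp p"
  shows "p4_feas P om r0 kp (modp p)"
proof -
  have key: "(\<Sum>i\<in>Os P. gam P i * (rbar P e - fbar P e / ubar P e) * vz p l e i t) - (vmu p l e t + max 0 (- vnu p l e t)) + fbar P e * veta p l e t \<ge> 0
     \<and> max (vnu p l e t) 0 = (vmu p l e t + max 0 (- vnu p l e t)) + (1 / real (nT P)) * (\<Sum>i\<in>Os P. gam P i * vx p e i t)
     \<and> \<bar>max (vnu p l e t) 0\<bar> \<le> vlam p"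
    if l: "l \<in> Ls P" and e: "e \<in> Es P" and t: "t \<in> Ts P" for l e t
  proof -
    have c1: "(\<Sum>i\<in>Os P. gam P i * (rbar P e - fbar P e / ubar P e) * vz p l e i t) - vmu p l e t + fbar P e * veta p l e t \<ge> 0"
      and c2: "vnu p l e t = vmu p l e t + (1 / real (nT P)) * (\<Sum>i\<in>Os P. gam P i * vx p e i t)"
      and c3: "0 \<le> veta p l e t" and c4: "\<bar>vnu p l e t\<bar> \<le> vlam p"
      using F l e t unfolding p4_feas_iff fF_def fG_def by auto
    have S: "0 \<le> (\<Sum>i\<in>Os P. gam P i * (rbar P e - fbar P e / ubar P e) * vz p l e i t)"
      using S_nonneg[OF F l e t] .
    have u: "0 < (\<Sum>i\<in>Os P. gam P i * vx p e i t)" using feas_u_pos[OF F e t] .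
    have f: "0 < fbar P e" using cells e by auto
    have T: "0 < real (nT P)" using dims by simp
    have "0 \<le> (1 / real (nT P)) * (\<Sum>i\<in>Os P. gam P i * vx p e i t)" using u T by simp
    moreover have "0 \<le> fbar P e * veta p l e t" using f c3 by simp
    ultimately show ?thesis using c1 c2 c4 S by (auto simp: max_def)
  qed
  show ?thesis
  proof -
    have "fA P (modp p) = fA P p" "fB P (modp p) = fB P p" "fC P om (modp p) = fC P om p"
      "fD P kp (modp p) = fD P kp p" "fE P r0 (modp p) = fE P r0 p"
      unfolding fA_def fB_def fC_def fD_def fE_def modp_def by simp_all
    moreover have "fF P (modp p)" using F key unfolding p4_feas_iff fF_def
      by (simp add: modp_def)
    moreover have "fG P (modp p)" unfolding fG_def
    proof (intro ballI)
      fix l e t assume "l \<in> Ls P" "e \<in> Es P" "t \<in> Ts P"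
      from conjunct2[OF conjunct2[OF key[OF this]]]
      show "\<bar>vnu (modp p) l e t\<bar> \<le> vlam (modp p)" by (simp add: modp_def)
    qed
    ultimately show ?thesis using F unfolding p4_feas_iff by simp
  qed
qed

lemma fin_sets: "finite (Es P)" "finite (Ts P)" "finite (Ls P)" "finite (Os P)"
  by (simp_all add: Es_def Ts_def Ls_def Os_def)

lemma modp_obj_diff:
  "p4_obj P eps (modp p) - p4_obj P eps p = (1 / real (nL P)) *
     (\<Sum>e\<in>Es P. \<Sum>t\<in>Ts P. \<Sum>l\<in>Ls P. (max (vnu p l e t) 0 - vnu p l e t) * vrho p l e t)"
proof -
  have "(\<Sum>e\<in>Es P. \<Sum>t\<in>Ts P. \<Sum>l\<in>Ls P. max (vnu p l e t) 0 * vrho p l e t)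
     - (\<Sum>e\<in>Es P. \<Sum>t\<in>Ts P. \<Sum>l\<in>Ls P. vnu p l e t * vrho p l e t)
     = (\<Sum>e\<in>Es P. \<Sum>t\<in>Ts P. \<Sum>l\<in>Ls P. (max (vnu p l e t) 0 - vnu p l e t) * vrho p l e t)"
    by (simp add: sum_subtractf[symmetric] left_diff_distrib)
  then show ?thesis
    unfolding p4_obj_def by (simp add: modp_def right_diff_distrib[symmetric] algebra_simps)
qed

lemma modp_obj_ge:
  assumes F: "p4_feas P om r0 kp p"
  shows "p4_obj P eps p \<le> p4_obj P eps (modp p)"
proof -
  have "0 \<le> (\<Sum>e\<in>Es P. \<Sum>t\<in>Ts P. \<Sum>l\<in>Ls P. (max (vnu p l e t) 0 - vnu p l e t) * vrho p l e t)"
    using feas_rho_nonneg[OF F] by (intro sum_nonneg mult_nonneg_nonneg) auto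
  then have "0 \<le> p4_obj P eps (modp p) - p4_obj P eps p"
    unfolding modp_obj_diff by simp
  then show ?thesis by simp
qed

lemma modp_nu: "0 \<le> vnu (modp p) l e t"
  by (simp add: modp_def)

lemma pair_feas:
  assumes F: "p4_feas P om r0 kp p" and nu: "\<forall>l\<in>Ls P. \<forall>e\<in>Es P. \<forall>t\<in>Ts P. 0 \<le> vnu p l e t"
  shows "p4'_feas P om r0 kp (p, thet p)"
  unfolding p4'_feas_def using F nu feas_rho_nonneg[OF F] by (simp add: thet_def)

lemma pair_obj:
  assumes F: "p4_feas P om r0 kp p" and nu: "\<forall>l\<in>Ls P. \<forall>e\<in>Es P. \<forall>t\<in>Ts P. 0 \<le> vnu p l e t"
  shows "p4'_obj P eps (p, thet p) = p4_obj P eps p"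
proof -
  have "(\<Sum>e\<in>Es P. \<Sum>t\<in>Ts P. \<Sum>l\<in>Ls P. (thet p l e t)\<^sup>2) = (\<Sum>e\<in>Es P. \<Sum>t\<in>Ts P. \<Sum>l\<in>Ls P. vnu p l e t * vrho p l e t)"
    using nu feas_rho_nonneg[OF F] by (intro sum.cong refl) (simp add: thet_def)
  then show ?thesis unfolding p4'_obj_def p4_obj_def by simp
qed

lemma obj'_le:
  assumes F: "p4'_feas P om r0 kp q"
  shows "p4'_obj P eps q \<le> p4_obj P eps (fst q)"
proof -
  have "(\<Sum>e\<in>Es P. \<Sum>t\<in>Ts P. \<Sum>l\<in>Ls P. (snd q l e t)\<^sup>2) \<le> (\<Sum>e\<in>Es P. \<Sum>t\<in>Ts P. \<Sum>l\<in>Ls P. vnu (fst q) l e t * vrho (fst q) l e t)"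
    using F unfolding p4'_feas_def by (intro sum_mono) auto
  then show ?thesis unfolding p4'_obj_def p4_obj_def by (simp add: divide_right_mono)
qed

lemma opt_nu_nonneg:
  assumes opt: "p \<in> p4_opt P eps om r0 kp"
    and hyp: "\<forall>l\<in>Ls P. \<forall>e\<in>Es P. \<forall>t\<in>Ts P. 0 < vrho p l e t"
  shows "\<forall>l\<in>Ls P. \<forall>e\<in>Es P. \<forall>t\<in>Ts P. 0 \<le> vnu p l e t"
proof (rule ccontr)
  assume "\<not> ?thesis"
  then obtain l0 e0 t0 where l0: "l0 \<in> Ls P" and e0: "e0 \<in> Es P" and t0: "t0 \<in> Ts P"
    and neg: "vnu p l0 e0 t0 < 0" by force
  have F: "p4_feas P om r0 kp p" using opt by (simp add: p4_opt_def)
  have le: "p4_obj P eps (modp p) \<le> p4_obj P eps p"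
    using opt modp_feas[OF F] by (simp add: p4_opt_def)
  let ?f = "\<lambda>l e t. (max (vnu p l e t) 0 - vnu p l e t) * vrho p l e t"
  have nn: "0 \<le> ?f l e t" if "l \<in> Ls P" "e \<in> Es P" "t \<in> Ts P" for l e t
    using feas_rho_nonneg[OF F that] by (intro mult_nonneg_nonneg) auto
  have pos: "0 < ?f l0 e0 t0" using neg hyp l0 e0 t0 by (intro mult_pos_pos) auto
  have "0 < (\<Sum>l\<in>Ls P. ?f l e0 t0)"
    by (rule sum_pos2[where f="\<lambda>l. ?f l e0 t0", OF fin_sets(3) l0]) (use pos nn e0 t0 in auto)
  then have "0 < (\<Sum>t\<in>Ts P. \<Sum>l\<in>Ls P. ?f l e0 t)"
    by (intro sum_pos2[OF fin_sets(2) t0]) (use nn e0 in \<open>auto intro!: sum_nonneg\<close>)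
  then have "0 < (\<Sum>e\<in>Es P. \<Sum>t\<in>Ts P. \<Sum>l\<in>Ls P. ?f l e t)"
    by (intro sum_pos2[OF fin_sets(1) e0]) (use nn in \<open>auto intro!: sum_nonneg\<close>)
  moreover have "0 < 1 / real (nL P)" using dims by simp
  ultimately have "0 < p4_obj P eps (modp p) - p4_obj P eps p"
    unfolding modp_obj_diff by simp
  with le show False by simp
qed

lemma part1:
  assumes eps: "0 < eps"
    and hyp: "\<forall>p\<in>p4_opt P eps om r0 kp. \<forall>l\<in>Ls P. \<forall>e\<in>Es P. \<forall>t\<in>Ts P. eps \<le> vrho p l e t"
  shows "(SUP p\<in>{p. p4_feas P om r0 kp p}. ereal (p4_obj P eps p))
          = (SUP q\<in>{q. p4'_feas P om r0 kp q}. ereal (p4'_obj P eps q))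
        \<and> p4_opt P eps om r0 kp = fst ` p4'_opt P eps om r0 kp"
proof (intro conjI antisym)
  show "(SUP p\<in>{p. p4_feas P om r0 kp p}. ereal (p4_obj P eps p))
          \<le> (SUP q\<in>{q. p4'_feas P om r0 kp q}. ereal (p4'_obj P eps q))"
  proof (rule SUP_mono)
    fix p assume "p \<in> {p. p4_feas P om r0 kp p}"
    then have F: "p4_feas P om r0 kp p" by simp
    have F': "p4_feas P om r0 kp (modp p)" by (rule modp_feas[OF F])
    have nu: "\<forall>l\<in>Ls P. \<forall>e\<in>Es P. \<forall>t\<in>Ts P. 0 \<le> vnu (modp p) l e t" by (simp add: modp_nu)
    show "\<exists>q\<in>{q. p4'_feas P om r0 kp q}. ereal (p4_obj P eps p) \<le> ereal (p4'_obj P eps q)"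
      using pair_feas[OF F' nu] pair_obj[OF F' nu] modp_obj_ge[OF F] by force
  qed
  show "(SUP q\<in>{q. p4'_feas P om r0 kp q}. ereal (p4'_obj P eps q))
          \<le> (SUP p\<in>{p. p4_feas P om r0 kp p}. ereal (p4_obj P eps p))"
  proof (rule SUP_mono)
    fix q assume "q \<in> {q. p4'_feas P om r0 kp q}"
    then have F: "p4'_feas P om r0 kp q" by simp
    then show "\<exists>p\<in>{p. p4_feas P om r0 kp p}. ereal (p4'_obj P eps q) \<le> ereal (p4_obj P eps p)"
      using obj'_le[OF F] by (auto simp: p4'_feas_def)
  qed
  show "p4_opt P eps om r0 kp \<subseteq> fst ` p4'_opt P eps om r0 kp"
  proof
    fix p assume opt: "p \<in> p4_opt P eps om r0 kp"
    have F: "p4_feas P om r0 kp p" using opt by (simp add: p4_opt_def)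
    have "\<forall>l\<in>Ls P. \<forall>e\<in>Es P. \<forall>t\<in>Ts P. 0 < vrho p l e t"
      using hyp opt eps by fastforce
    then have nu: "\<forall>l\<in>Ls P. \<forall>e\<in>Es P. \<forall>t\<in>Ts P. 0 \<le> vnu p l e t"
      by (rule opt_nu_nonneg[OF opt])
    have "(p, thet p) \<in> p4'_opt P eps om r0 kp"
      unfolding p4'_opt_def
    proof (intro CollectI conjI allI impI)
      show "p4'_feas P om r0 kp (p, thet p)" by (rule pair_feas[OF F nu])
      fix q' assume F': "p4'_feas P om r0 kp q'"
      have "p4_feas P om r0 kp (fst q')" using F' by (simp add: p4'_feas_def)
      then have "p4_obj P eps (fst q') \<le> p4_obj P eps p" using opt by (simp add: p4_opt_def)
      then show "p4'_obj P eps q' \<le> p4'_obj P eps (p, thet p)"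
        using obj'_le[OF F', where eps=eps] pair_obj[OF F nu, where eps=eps] by linarith
    qed
    then show "p \<in> fst ` p4'_opt P eps om r0 kp" by force
  qed
  show "fst ` p4'_opt P eps om r0 kp \<subseteq> p4_opt P eps om r0 kp"
  proof
    fix p assume "p \<in> fst ` p4'_opt P eps om r0 kp"
    then obtain q where q: "q \<in> p4'_opt P eps om r0 kp" and pq: "p = fst q" by blast
    have Fq: "p4'_feas P om r0 kp q" using q by (simp add: p4'_opt_def)
    have F: "p4_feas P om r0 kp p" using Fq pq by (simp add: p4'_feas_def)
    show "p \<in> p4_opt P eps om r0 kp"
      unfolding p4_opt_def
    proof (intro CollectI conjI allI impI F)
      fix p' assume F': "p4_feas P om r0 kp p'"
      have F'': "p4_feas P om r0 kp (modp p')" by (rule modp_feas[OF F'])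
      have nu: "\<forall>l\<in>Ls P. \<forall>e\<in>Es P. \<forall>t\<in>Ts P. 0 \<le> vnu (modp p') l e t" by (simp add: modp_nu)
      have "p4'_obj P eps (modp p', thet (modp p')) \<le> p4'_obj P eps q"
        using q pair_feas[OF F'' nu] by (simp add: p4'_opt_def)
      then show "p4_obj P eps p' \<le> p4_obj P eps p"
        using modp_obj_ge[OF F', where eps=eps] pair_obj[OF F'' nu, where eps=eps] obj'_le[OF Fq, where eps=eps] unfolding pq by linarith
    qed
  qed
qed

end



lemma coord:
  fixes \<xi> \<zeta> c lam \<nu> \<mu> a K \<eta> F :: real
  assumes "0 \<le> \<xi>" "\<xi> \<le> c" "\<bar>\<nu>\<bar> \<le> lam" "\<nu> = \<mu> + a" "\<mu> \<le> K * \<eta>" "0 \<le> \<eta>" "0 \<le> K" "0 \<le> c" "K * c = F"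
  shows "\<nu> * \<zeta> - F * \<eta> \<le> a * \<xi> + lam * \<bar>\<xi> - \<zeta>\<bar>"
proof -
  have "\<nu> * (\<zeta> - \<xi>) \<le> \<bar>\<nu>\<bar> * \<bar>\<xi> - \<zeta>\<bar>"
    by (metis abs_ge_self abs_minus_commute abs_mult)
  also have "\<dots> \<le> lam * \<bar>\<xi> - \<zeta>\<bar>" using assms(3) by (intro mult_right_mono) auto
  finally have 1: "\<nu> * (\<zeta> - \<xi>) \<le> lam * \<bar>\<xi> - \<zeta>\<bar>" .
  have 2: "\<mu> * \<xi> \<le> F * \<eta>"
  proof (cases "\<mu> \<le> 0")
    case True
    then have "\<mu> * \<xi> \<le> 0" using assms(1) by (simp add: mult_nonpos_nonneg)
    moreover have "0 \<le> F * \<eta>" using assms(6-9) by auto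
    ultimately show ?thesis by linarith
  next
    case False
    then have "\<mu> * \<xi> \<le> \<mu> * c" using assms(2) by (intro mult_left_mono) auto
    also have "\<dots> \<le> (K * \<eta>) * c" using assms(5,8) by (intro mult_right_mono) auto
    also have "\<dots> = F * \<eta>" using assms(9) by (simp add: algebra_simps)
    finally show ?thesis .
  qed
  show ?thesis using 1 2 assms(4) by (simp add: algebra_simps)
qed

lemma rhoc_id:
  assumes "0 < ubar P e" "0 < rbar P e" "0 < fbar P e" "ubar P e * rbar P e > fbar P e" "0 < v"
  shows "(v * (rbar P e - fbar P e / ubar P e) + fbar P e) * rhoc P e v = fbar P e * rbar P e"
    and "0 < rhoc P e v"
proof -
  have D: "0 < ubar P e * rbar P e - fbar P e" using assms by simp
  have tau: "0 < tau P e" unfolding tau_def using D assms by simp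
  have den: "0 < tau P e * ubar P e + v" using tau assms by (simp add: add_pos_pos)
  show "0 < rhoc P e v" unfolding rhoc_def using tau assms den by simp
  have r: "rhoc P e v = fbar P e * rbar P e * ubar P e / (fbar P e * ubar P e + v * (ubar P e * rbar P e - fbar P e))"
  proof -
    define Dd where "Dd = ubar P e * rbar P e - fbar P e"
    have Dd: "0 < Dd" using D by (simp add: Dd_def)
    have t1: "tau P e * rbar P e * ubar P e = (fbar P e * rbar P e * ubar P e) / Dd"
      unfolding tau_def Dd_def by simp
    have t2: "tau P e * ubar P e + v = (fbar P e * ubar P e + v * Dd) / Dd"
      unfolding tau_def Dd_def[symmetric] using Dd by (simp add: field_simps)
    have gen: "(a / d) / (b / d) = a / b" if "d \<noteq> 0" for a b d :: real
      using that by simp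
    show ?thesis unfolding rhoc_def t1 t2 Dd_def[symmetric] using Dd gen by simp
  qed
  have K: "v * (rbar P e - fbar P e / ubar P e) + fbar P e = (fbar P e * ubar P e + v * (ubar P e * rbar P e - fbar P e)) / ubar P e"
    using assms(1) by (simp add: field_simps)
  have pos: "0 < fbar P e * ubar P e + v * (ubar P e * rbar P e - fbar P e)"
    using D assms by (simp add: add_pos_pos)
  show "(v * (rbar P e - fbar P e / ubar P e) + fbar P e) * rhoc P e v = fbar P e * rbar P e"
  proof -
    have gen: "(y / u) * (f * r * u / y) = f * r" if "y \<noteq> 0" "u \<noteq> 0" for y u f r :: real
      using that by simp
    show ?thesis unfolding r K using pos assms(1) gen by simp
  qed
qed

context setting
begin

lemma y_eq:
  assumes F: "p4_feas P om r0 kp p" and "l \<in> Ls P" "e \<in> Es P" "i \<in> Os P" "t \<in> Ts P"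
  shows "vy p l e i t = vx p e i t * vrho p l e t" and "vz p l e i t = vx p e i t * veta p l e t"
proof -
  have x: "vx p e i t = 0 \<or> vx p e i t = 1" using F assms unfolding p4_feas_iff fA_def by auto
  have b: "0 \<le> vz p l e i t \<and> vz p l e i t \<le> etab P * vx p e i t \<and>
          veta p l e t - etab P * (1 - vx p e i t) \<le> vz p l e i t \<and> vz p l e i t \<le> veta p l e t \<and>
          0 \<le> vy p l e i t \<and> vy p l e i t \<le> rbar P e * vx p e i t \<and>
          vrho p l e t - rbar P e * (1 - vx p e i t) \<le> vy p l e i t \<and> vy p l e i t \<le> vrho p l e t"
    using F assms unfolding p4_feas_iff fB_def by auto
  show "vy p l e i t = vx p e i t * vrho p l e t" using x b by auto
  show "vz p l e i t = vx p e i t * veta p l e t" using x b by auto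
qed

lemma Sy_eq:
  assumes F: "p4_feas P om r0 kp p" and "l \<in> Ls P" "e \<in> Es P" "t \<in> Ts P"
  shows "(\<Sum>i\<in>Os P. gam P i * vy p l e i t) = uOf P (vx p) e t * vrho p l e t"
  unfolding uOf_def sum_distrib_right using y_eq(1)[OF F assms(2,3) _ assms(4)]
  by (intro sum.cong) auto

lemma Sz_eq:
  assumes F: "p4_feas P om r0 kp p" and "l \<in> Ls P" "e \<in> Es P" "t \<in> Ts P"
  shows "(\<Sum>i\<in>Os P. gam P i * (rbar P e - fbar P e / ubar P e) * vz p l e i t)
     = uOf P (vx p) e t * (rbar P e - fbar P e / ubar P e) * veta p l e t"
  unfolding uOf_def sum_distrib_right using y_eq(2)[OF F assms(2,3) _ assms(4)]
  by (intro sum.cong) auto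

lemma traj_eq:
  assumes F: "p4_feas P om r0 kp p" and u: "\<forall>e\<in>Es P. \<forall>t\<in>Ts P. uOf P (vx p) e t = u e t"
    and l: "l \<in> Ls P"
  shows "t \<in> Ts P \<Longrightarrow> e \<in> Es P \<Longrightarrow> vrho p l e t = traj P u (om l) (r0 l) (kp l) e t"
proof (induction t arbitrary: e)
  case 0
  then show ?case using F l unfolding p4_feas_iff fE_def by simp
next
  case (Suc t)
  have t: "t \<in> Ts P" using Suc.prems(1) by (simp add: Ts_def)
  have one: "1 \<in> Es P" using dims by (simp add: Es_def)
  show ?case
  proof (cases "e = 1")
    case True
    have "vrho p l 1 (Suc t) = vrho p l 1 t + hh P 1 * om l t - hh P 1 * (\<Sum>i\<in>Os P. gam P i * vy p l 1 i t)"
      using F l t unfolding p4_feas_iff fC_def by simp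
    also have "(\<Sum>i\<in>Os P. gam P i * vy p l 1 i t) = u 1 t * vrho p l 1 t"
      using Sy_eq[OF F l one t] u one t by simp
    finally show ?thesis using True Suc.IH[OF t one] by (simp add: algebra_simps)
  next
    case False
    then have e2: "2 \<le> e" using Suc.prems(2) by (simp add: Es_def)
    have e1: "e - 1 \<in> Es P" using Suc.prems(2) e2 by (auto simp: Es_def)
    have "vrho p l e (Suc t) = vrho p l e t + hh P e * kp l e t * (\<Sum>i\<in>Os P. gam P i * vy p l (e - 1) i t) - hh P e * (\<Sum>i\<in>Os P. gam P i * vy p l e i t)"
      using F l t Suc.prems(2) e2 unfolding p4_feas_iff fD_def by simp
    also have "(\<Sum>i\<in>Os P. gam P i * vy p l (e - 1) i t) = u (e - 1) t * vrho p l (e - 1) t"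
      using Sy_eq[OF F l e1 t] u e1 t by simp
    also have "(\<Sum>i\<in>Os P. gam P i * vy p l e i t) = u e t * vrho p l e t"
      using Sy_eq[OF F l Suc.prems(2) t] u Suc.prems(2) t by simp
    finally show ?thesis using False Suc.IH[OF t e1] Suc.IH[OF t Suc.prems(2)] by (simp add: algebra_simps)
  qed
qed

lemma pw:
  assumes F: "p4_feas P om r0 kp p" and u: "\<forall>e\<in>Es P. \<forall>t\<in>Ts P. uOf P (vx p) e t = u e t"
    and l: "l \<in> Ls P" and xi: "\<xi> \<in> supp_set P u"
  shows "(\<Sum>e\<in>Es P. \<Sum>t\<in>Ts P. vnu p l e t * vrho p l e t - fbar P e * rbar P e * veta p l e t)
     \<le> Hf P u \<xi> + vlam p * norm1 P (\<lambda>e t. \<xi> e t - trajw P u (om l) (r0 l) (kp l) e t)"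
proof -
  have R: "Hf P u \<xi> + vlam p * norm1 P (\<lambda>e t. \<xi> e t - trajw P u (om l) (r0 l) (kp l) e t)
    = (\<Sum>e\<in>Es P. \<Sum>t\<in>Ts P. (1 / real (nT P) * u e t) * \<xi> e t + vlam p * \<bar>\<xi> e t - vrho p l e t\<bar>)"
  proof -
    have "norm1 P (\<lambda>e t. \<xi> e t - trajw P u (om l) (r0 l) (kp l) e t) = (\<Sum>e\<in>Es P. \<Sum>t\<in>Ts P. \<bar>\<xi> e t - vrho p l e t\<bar>)"
      unfolding norm1_def trajw_def using traj_eq[OF F u l] by (intro sum.cong refl) auto
    then show ?thesis
      unfolding Hf_def by (simp add: sum_distrib_left sum.distrib algebra_simps)
  qed
  show ?thesis unfolding R
  proof (intro sum_mono)
    fix e t assume e: "e \<in> Es P" and t: "t \<in> Ts P"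
    have c: "0 < fbar P e" "0 < ubar P e" "0 < rbar P e" "ubar P e * rbar P e > fbar P e"
      using cells e by auto
    have up: "0 < u e t" using feas_u_pos[OF F e t] u e t by (simp add: uOf_def)
    have cF: "p4_feas P om r0 kp p" by (rule F)
    have f1: "(\<Sum>i\<in>Os P. gam P i * (rbar P e - fbar P e / ubar P e) * vz p l e i t) - vmu p l e t + fbar P e * veta p l e t \<ge> 0"
      and f2: "vnu p l e t = vmu p l e t + (1 / real (nT P)) * (\<Sum>i\<in>Os P. gam P i * vx p e i t)"
      and f3: "0 \<le> veta p l e t" and f4: "\<bar>vnu p l e t\<bar> \<le> vlam p"
      using F l e t unfolding p4_feas_iff fF_def fG_def by auto
    have Sz: "(\<Sum>i\<in>Os P. gam P i * (rbar P e - fbar P e / ubar P e) * vz p l e i t) = u e t * (rbar P e - fbar P e / ubar P e) * veta p l e t"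
      using Sz_eq[OF F l e t] u e t by simp
    have Kn: "0 \<le> rbar P e - fbar P e / ubar P e" using c by (simp add: field_simps)
    have xi1: "0 \<le> \<xi> e t" "\<xi> e t \<le> rhoc P e (u e t)" using xi e t by (auto simp: supp_set_def)
    show "vnu p l e t * vrho p l e t - fbar P e * rbar P e * veta p l e t
        \<le> 1 / real (nT P) * u e t * \<xi> e t + vlam p * \<bar>\<xi> e t - vrho p l e t\<bar>"
    proof (rule coord[where c="rhoc P e (u e t)" and \<mu>="vmu p l e t" and K="u e t * (rbar P e - fbar P e / ubar P e) + fbar P e"])
      show "0 \<le> \<xi> e t" "\<xi> e t \<le> rhoc P e (u e t)" by (fact xi1)+
      show "\<bar>vnu p l e t\<bar> \<le> vlam p" by (fact f4)
      show "vnu p l e t = vmu p l e t + 1 / real (nT P) * u e t"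
        using f2 u e t by (simp add: uOf_def)
      show "vmu p l e t \<le> (u e t * (rbar P e - fbar P e / ubar P e) + fbar P e) * veta p l e t"
        using f1 Sz by (simp add: algebra_simps)
      show "0 \<le> veta p l e t" by (fact f3)
      show "0 \<le> u e t * (rbar P e - fbar P e / ubar P e) + fbar P e"
        using up Kn c by (simp add: add_nonneg_nonneg)
      show "0 \<le> rhoc P e (u e t)" using rhoc_id(2)[OF c(2,3,1,4) up] by simp
      show "(u e t * (rbar P e - fbar P e / ubar P e) + fbar P e) * rhoc P e (u e t) = fbar P e * rbar P e"
        by (rule rhoc_id(1)[OF c(2,3,1,4) up])
    qed
  qed
qed

lemma obj_eq:
  "p4_obj P eps p = (\<Sum>l\<in>Ls P. \<Sum>e\<in>Es P. \<Sum>t\<in>Ts P. vnu p l e t * vrho p l e t - fbar P e * rbar P e * veta p l e t) / real (card (Ls P)) - vlam p * eps"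
proof -
  have sw: "(\<Sum>l\<in>Ls P. \<Sum>e\<in>Es P. \<Sum>t\<in>Ts P. X l e t) = (\<Sum>e\<in>Es P. \<Sum>t\<in>Ts P. \<Sum>l\<in>Ls P. X l e t)" for X :: "nat \<Rightarrow> nat \<Rightarrow> nat \<Rightarrow> real"
  proof -
    have "(\<Sum>l\<in>Ls P. \<Sum>e\<in>Es P. \<Sum>t\<in>Ts P. X l e t) = (\<Sum>e\<in>Es P. \<Sum>l\<in>Ls P. \<Sum>t\<in>Ts P. X l e t)"
      by (rule sum.swap)
    also have "\<dots> = (\<Sum>e\<in>Es P. \<Sum>t\<in>Ts P. \<Sum>l\<in>Ls P. X l e t)"
      by (intro sum.cong refl sum.swap)
    finally show ?thesis .
  qed
  have cL: "card (Ls P) = nL P" by (simp add: Ls_def)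
  show ?thesis unfolding sw cL p4_obj_def
    by (simp add: sum_subtractf diff_divide_distrib algebra_simps)
qed

lemma Hf_bound:
  assumes "\<xi> \<in> supp_set P u"
  shows "\<bar>Hf P u \<xi>\<bar> \<le> (1 / real (nT P)) * (\<Sum>e\<in>Es P. \<Sum>t\<in>Ts P. \<bar>rhoc P e (u e t) * u e t\<bar>)"
proof -
  have "\<bar>Hf P u \<xi>\<bar> = (1 / real (nT P)) * \<bar>\<Sum>e\<in>Es P. \<Sum>t\<in>Ts P. \<xi> e t * u e t\<bar>"
    unfolding Hf_def by (simp add: abs_mult)
  also have "\<dots> \<le> (1 / real (nT P)) * (\<Sum>e\<in>Es P. \<Sum>t\<in>Ts P. \<bar>rhoc P e (u e t) * u e t\<bar>)"
  proof (intro mult_left_mono)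
    have "\<bar>\<Sum>e\<in>Es P. \<Sum>t\<in>Ts P. \<xi> e t * u e t\<bar> \<le> (\<Sum>e\<in>Es P. \<bar>\<Sum>t\<in>Ts P. \<xi> e t * u e t\<bar>)"
      by (rule sum_abs)
    also have "\<dots> \<le> (\<Sum>e\<in>Es P. \<Sum>t\<in>Ts P. \<bar>\<xi> e t * u e t\<bar>)"
      by (intro sum_mono sum_abs)
    also have "\<dots> \<le> (\<Sum>e\<in>Es P. \<Sum>t\<in>Ts P. \<bar>rhoc P e (u e t) * u e t\<bar>)"
    proof (intro sum_mono)
      fix e t assume "e \<in> Es P" "t \<in> Ts P"
      then have "0 \<le> \<xi> e t" "\<xi> e t \<le> rhoc P e (u e t)" using assms by (auto simp: supp_set_def)
      then show "\<bar>\<xi> e t * u e t\<bar> \<le> \<bar>rhoc P e (u e t) * u e t\<bar>"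
        by (simp add: abs_mult mult_right_mono)
    qed
    finally show "\<bar>\<Sum>e\<in>Es P. \<Sum>t\<in>Ts P. \<xi> e t * u e t\<bar> \<le> (\<Sum>e\<in>Es P. \<Sum>t\<in>Ts P. \<bar>rhoc P e (u e t) * u e t\<bar>)" .
  qed simp
  finally show ?thesis .
qed

end


lemma gam_mono_aux:
  assumes "\<forall>i. 1 \<le> i \<and> i < nO P \<longrightarrow> gam P i < gam P (Suc i)"
  shows "1 \<le> i \<Longrightarrow> i \<le> nO P \<Longrightarrow> gam P 1 \<le> gam P i"
proof (induction i)
  case 0 then show ?case by simp
next
  case (Suc i)
  show ?case
  proof (cases "i = 0")
    case True then show ?thesis by simp
  next
    case False
    then have "gam P 1 \<le> gam P i" using Suc by simp
    moreover have "gam P i < gam P (Suc i)" using assms Suc.prems False by simp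
    ultimately show ?thesis by simp
  qed
qed

theorem lemma4:
  fixes P :: netp and eps beta :: real and Pw :: "'w measure"
    and om r0 :: "'w \<Rightarrow> nat \<Rightarrow> real" and rin ro :: "'w \<Rightarrow> nat \<Rightarrow> nat \<Rightarrow> real"
  assumes dims: "1 \<le> nE P" "1 \<le> nT P" "1 \<le> nL P" "1 \<le> nO P"
    and gam_pos: "0 < gam P 1"
    and gam_incr: "\<forall>i. 1 \<le> i \<and> i < nO P \<longrightarrow> gam P i < gam P (Suc i)"
    and cells: "\<forall>e\<in>Es P. 0 < hh P e \<and> 0 < rbar P e \<and> 0 < fbar P e \<and> 0 < ubar P e
                  \<and> ubar P e * rbar P e > fbar P e"
    and etab_pos: "0 < etab P"
    and prob: "prob_space Pw"
    and meas_om: "\<forall>t\<in>Ts P. (\<lambda>w. om w t) \<in> borel_measurable Pw"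
    and meas_r0: "\<forall>e\<in>Es P. (\<lambda>w. r0 w e) \<in> borel_measurable Pw"
    and meas_r: "\<forall>e\<in>Es P. \<forall>t\<in>Ts P. (\<lambda>w. rin w e t) \<in> borel_measurable Pw
                   \<and> (\<lambda>w. ro w e t) \<in> borel_measurable Pw"
    and ranges: "\<forall>w\<in>space Pw. (\<forall>t\<in>Ts P. 0 \<le> om w t) \<and> (\<forall>e\<in>Es P. 0 \<le> r0 w e) \<and>
                   (\<forall>e\<in>Es P. \<forall>t\<in>Ts P. 0 \<le> rin w e t \<and> rin w e t < 1 \<and> 0 \<le> ro w e t \<and> ro w e t < 1)"
    and light: "\<exists>a>1. (\<integral>\<^sup>+ w. ennreal (exp (wnorm P om r0 rin ro w powr a)) \<partial>Pw) < \<infinity>"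
    and beta: "0 < beta" "beta < 1"
    and eps_pos: "0 < eps"
    and eps_ball: "\<forall>u. (\<forall>e\<in>Es P. \<forall>t\<in>Ts P. u e t \<in> gam P ` Os P) \<longrightarrow>
        (\<exists>A\<in>sets (ProbN P Pw). measure (ProbN P Pw) A \<ge> 1 - beta \<and>
           (\<forall>s\<in>A. Pu P Pw om r0 rin ro u \<in> wball P eps u (Phat P om r0 rin ro u s)))"
  shows
    "(\<forall>s::nat \<Rightarrow> 'w.
        (\<forall>p\<in>p4_opt P eps (omS om s) (r0S r0 s) (kS rin ro s).
            \<forall>l\<in>Ls P. \<forall>e\<in>Es P. \<forall>t\<in>Ts P. eps \<le> vrho p l e t) \<longrightarrow>
        (SUP p\<in>{p. p4_feas P (omS om s) (r0S r0 s) (kS rin ro s) p}. ereal (p4_obj P eps p))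
          = (SUP q\<in>{q. p4'_feas P (omS om s) (r0S r0 s) (kS rin ro s) q}. ereal (p4'_obj P eps q))
        \<and> p4_opt P eps (omS om s) (r0S r0 s) (kS rin ro s)
          = fst ` p4'_opt P eps (omS om s) (r0S r0 s) (kS rin ro s))
     \<and>
     (\<forall>u. (\<forall>e\<in>Es P. \<forall>t\<in>Ts P. u e t \<in> gam P ` Os P) \<longrightarrow>
        (\<exists>A\<in>sets (ProbN P Pw). measure (ProbN P Pw) A \<ge> 1 - beta \<and>
           (\<forall>s\<in>A. \<forall>q. p4'_feas P (omS om s) (r0S r0 s) (kS rin ro s) q \<and>
                (\<forall>e\<in>Es P. \<forall>t\<in>Ts P. uOf P (vx (fst q)) e t = u e t) \<longrightarrow>
                p4'_obj P eps q \<le> (\<integral>\<rho>. Hf P u \<rho> \<partial>(Pu P Pw om r0 rin ro u)))))"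
proof -
  have gpos: "\<forall>i\<in>Os P. 0 < gam P i"
  proof
    fix i assume "i \<in> Os P"
    then have "gam P 1 \<le> gam P i" using gam_mono_aux[OF gam_incr] by (simp add: Os_def)
    then show "0 < gam P i" using gam_pos by simp
  qed
  interpret S: setting P using dims gpos cells by unfold_locales
  show ?thesis
  proof (intro conjI allI impI)
    fix s :: "nat \<Rightarrow> 'w"
    assume hyp: "\<forall>p\<in>p4_opt P eps (omS om s) (r0S r0 s) (kS rin ro s).
            \<forall>l\<in>Ls P. \<forall>e\<in>Es P. \<forall>t\<in>Ts P. eps \<le> vrho p l e t"
    from S.part1[OF eps_pos hyp]
    show "(SUP p\<in>{p. p4_feas P (omS om s) (r0S r0 s) (kS rin ro s) p}. ereal (p4_obj P eps p))
          = (SUP q\<in>{q. p4'_feas P (omS om s) (r0S r0 s) (kS rin ro s) q}. ereal (p4'_obj P eps q))"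
      by simp
    from S.part1[OF eps_pos hyp]
    show "p4_opt P eps (omS om s) (r0S r0 s) (kS rin ro s)
          = fst ` p4'_opt P eps (omS om s) (r0S r0 s) (kS rin ro s)"
      by simp
  next
    fix u :: "nat \<Rightarrow> nat \<Rightarrow> real"
    assume hu: "\<forall>e\<in>Es P. \<forall>t\<in>Ts P. u e t \<in> gam P ` Os P"
    obtain A where A: "A \<in> sets (ProbN P Pw)" "measure (ProbN P Pw) A \<ge> 1 - beta"
      and Aw: "\<forall>s\<in>A. Pu P Pw om r0 rin ro u \<in> wball P eps u (Phat P om r0 rin ro u s)"
      using eps_ball hu by blast
    show "\<exists>A\<in>sets (ProbN P Pw). measure (ProbN P Pw) A \<ge> 1 - beta \<and>
           (\<forall>s\<in>A. \<forall>q. p4'_feas P (omS om s) (r0S r0 s) (kS rin ro s) q \<and>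
                (\<forall>e\<in>Es P. \<forall>t\<in>Ts P. uOf P (vx (fst q)) e t = u e t) \<longrightarrow>
                p4'_obj P eps q \<le> (\<integral>\<rho>. Hf P u \<rho> \<partial>(Pu P Pw om r0 rin ro u)))"
    proof (intro bexI[OF _ A(1)] conjI A(2) ballI allI impI)
      fix s q
      assume s: "s \<in> A"
        and hq: "p4'_feas P (omS om s) (r0S r0 s) (kS rin ro s) q \<and>
                (\<forall>e\<in>Es P. \<forall>t\<in>Ts P. uOf P (vx (fst q)) e t = u e t)"
      let ?Q = "Pu P Pw om r0 rin ro u"
      let ?Z = "\<lambda>l. trajw P u (om (s l)) (r0 (s l)) (kap (rin (s l)) (ro (s l)))"
      have F': "p4'_feas P (omS om s) (r0S r0 s) (kS rin ro s) q" using hq by simp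
      have uq: "\<forall>e\<in>Es P. \<forall>t\<in>Ts P. uOf P (vx (fst q)) e t = u e t" using hq by simp
      have F: "p4_feas P (omS om s) (r0S r0 s) (kS rin ro s) (fst q)"
        using F' by (simp add: p4'_feas_def)
      have W: "?Q \<in> wball P eps u (Phat P om r0 rin ro u s)" using Aw s by blast
      have Qp: "prob_space ?Q" and Qs: "sets ?Q = sets TS" and AEQ: "AE \<xi> in ?Q. \<xi> \<in> supp_set P u"
        and WW: "Wass P ?Q (distr (uniform_count_measure (Ls P)) TS ?Z) \<le> ennreal eps"
        using W unfolding wball_def Phat_def by auto
      have one: "1 \<in> Ls P" "1 \<in> Es P" "0 \<in> Ts P" using dims by (auto simp: Ls_def Es_def Ts_def)
      have lam: "0 \<le> vlam (fst q)"
      proof -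
        have "\<bar>vnu (fst q) 1 1 0\<bar> \<le> vlam (fst q)"
          using F one unfolding p4_feas_iff fG_def by blast
        then show ?thesis by linarith
      qed
      have hint: "integrable ?Q (Hf P u)"
      proof -
        interpret Q: prob_space ?Q by (rule Qp)
        show ?thesis
        proof (rule Q.integrable_const_bound[where B="(1 / real (nT P)) * (\<Sum>e\<in>Es P. \<Sum>t\<in>Ts P. \<bar>rhoc P e (u e t) * u e t\<bar>)"])
          show "AE x in ?Q. norm (Hf P u x) \<le> (1 / real (nT P)) * (\<Sum>e\<in>Es P. \<Sum>t\<in>Ts P. \<bar>rhoc P e (u e t) * u e t\<bar>)"
            using AEQ
          proof (rule eventually_mono)
            fix x assume "x \<in> supp_set P u"
            then show "norm (Hf P u x) \<le> (1 / real (nT P)) * (\<Sum>e\<in>Es P. \<Sum>t\<in>Ts P. \<bar>rhoc P e (u e t) * u e t\<bar>)"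
              unfolding real_norm_def by (rule S.Hf_bound)
          qed
          show "Hf P u \<in> borel_measurable ?Q"
            using meas_Hf measurable_cong_sets[OF Qs refl] by blast
        qed
      qed
      have pw: "\<forall>l\<in>Ls P. \<forall>\<xi>\<in>supp_set P u.
          (\<Sum>e\<in>Es P. \<Sum>t\<in>Ts P. vnu (fst q) l e t * vrho (fst q) l e t - fbar P e * rbar P e * veta (fst q) l e t)
            \<le> Hf P u \<xi> + vlam (fst q) * norm1 P (\<lambda>e t. \<xi> e t - ?Z l e t)"
      proof (intro ballI)
        fix l \<xi> assume l: "l \<in> Ls P" and xi: "\<xi> \<in> supp_set P u"
        from S.pw[OF F uq l xi]
        show "(\<Sum>e\<in>Es P. \<Sum>t\<in>Ts P. vnu (fst q) l e t * vrho (fst q) l e t - fbar P e * rbar P e * veta (fst q) l e t)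
            \<le> Hf P u \<xi> + vlam (fst q) * norm1 P (\<lambda>e t. \<xi> e t - ?Z l e t)"
          by (simp add: omS_def r0S_def kS_def)
      qed
      have fin: "finite (Ls P)" "Ls P \<noteq> {}" using one by (auto simp: Ls_def)
      have "p4'_obj P eps q \<le> p4_obj P eps (fst q)" by (rule S.obj'_le[OF F'])
      also have "\<dots> = (\<Sum>l\<in>Ls P. \<Sum>e\<in>Es P. \<Sum>t\<in>Ts P. vnu (fst q) l e t * vrho (fst q) l e t - fbar P e * rbar P e * veta (fst q) l e t) / real (card (Ls P)) - vlam (fst q) * eps"
        by (rule S.obj_eq)
      also have "\<dots> \<le> integral\<^sup>L ?Q (Hf P u)"
        by (rule dro_bound[OF fin Qp Qs AEQ WW lam less_imp_le[OF eps_pos] meas_Hf hint pw])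
      finally show "p4'_obj P eps q \<le> (\<integral>\<rho>. Hf P u \<rho> \<partial>?Q)" .
    qed
  qed
qed

end
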